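(* Let $G$ be a connected simple graph without bridges whose edge set is identified with $[d+1]$, let $B_1,\dots,B_n$ be the bases (spanning trees) of its graphic matroid, all of cardinality $k$, and let $V=(-e_{B_1},\dots,-e_{B_n})$ in $\mathbb{T}^d$. Let $\mathbb{K}$ be a field and $I=\langle x^{\mathbf{t}(p)}: p\in\mathbb{T}^d\rangle\subseteq\mathbb{K}[x_1,\dots,x_{d+1}]$ be the coarse type ideal, where $\mathbf{t}(p)$ is the coarse type of $p$ with respect to $V$ and $x^{\mathbf{t}}=x_1^{t_1}\cdots x_{d+1}^{t_{d+1}}$. Then $I$ is generated by the monomials $$x_{i_1}^{t_{i_1}}x_{i_2}^{t_{i_2}}\cdots x_{i_{d'+1}}^{t_{i_{d'+1}}}$$ where $d'\ge 0$, $i_1,\dots,i_{d'+1}\in[d+1]$ are pairwise distinct with $[d+1]\setminus\{i_1,\dots,i_{d'}\}$ containing a basis, and $$(t_{i_1},t_{i_2},\dots,t_{i_{d'+1}})=\big(b_{\{i_1\},\emptyset}+b_{\emptyset,\{i_1,\dots,i_{d'+1}\}},\,b_{\{i_2\},\{i_1\}},\,\dots,\,b_{\{i_{d'+1}\},\{i_1,\dots,i_{d'}\}}\big).$$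
   Context: Tropical arithmetic is min-plus; $\mathbb{T}^d=\mathbb{R}^{d+1}/\mathbb{R}(1,\dots,1)$. For $B\subseteq[d+1]$, $e_B=\sum_{i\in B}e_i$. For $m\in[d+1]$ let $\bar S_m=\{\xi\in\mathbb{T}^d:\xi_m=\min_i\xi_i\}$. For $V=(v_1,\dots,v_n)$ and $x\in\mathbb{T}^d$, $\operatorname{type}_V(x)=(T_1,\dots,T_{d+1})$ with $T_m=\{l\in[n]:v_l\in x+\bar S_m\}$, and the coarse type of $x$ is $(|T_1|,\dots,|T_{d+1}|)$. For $I,J\subseteq[d+1]$, $b_{I,J}$ is the number of bases $B$ with $I\subseteq B$ and $J\cap B=\emptyset$. *)

theory Defs
  imports Complex_Main "HOL-Library.Poly_Mapping"
begin

section \<open>Graphs: edges indexed by a finite type 'e (the set [d+1]), vertices a finite type 'v\<close>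

text \<open>A graph on vertex set UNIV::'v set with edge e joining the two vertices ends e.\<close>

definition simple_graph :: "('e \<Rightarrow> 'v set) \<Rightarrow> bool" where
  "simple_graph ends \<longleftrightarrow> (\<forall>e. card (ends e) = 2) \<and> inj ends"

definition adj :: "('e \<Rightarrow> 'v set) \<Rightarrow> 'e set \<Rightarrow> 'v \<Rightarrow> 'v \<Rightarrow> bool" where
  "adj ends F u v \<longleftrightarrow> (\<exists>e\<in>F. ends e = {u, v})"

definition connects :: "('e \<Rightarrow> 'v set) \<Rightarrow> 'e set \<Rightarrow> bool" where
  "connects ends F \<longleftrightarrow> (\<forall>u v. (adj ends F)\<^sup>*\<^sup>* u v)"

definition bridgeless :: "('e \<Rightarrow> 'v set) \<Rightarrow> bool" where
  "bridgeless ends \<longleftrightarrow> (\<forall>e. connects ends (UNIV - {e}))"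

text \<open>Spanning trees = minimal connected spanning subgraphs = bases of the graphic matroid
  of a connected graph.\<close>
definition spanning_tree :: "('e \<Rightarrow> 'v set) \<Rightarrow> 'e set \<Rightarrow> bool" where
  "spanning_tree ends B \<longleftrightarrow> connects ends B \<and> (\<forall>e\<in>B. \<not> connects ends (B - {e}))"

definition bases :: "('e \<Rightarrow> 'v set) \<Rightarrow> 'e set set" where
  "bases ends = {B. spanning_tree ends B}"

definition bIJ :: "('e \<Rightarrow> 'v set) \<Rightarrow> 'e set \<Rightarrow> 'e set \<Rightarrow> nat" where
  "bIJ ends I J = card {B \<in> bases ends. I \<subseteq> B \<and> J \<inter> B = {}}"

text \<open>The point -e_B (a representative in R^(d+1) of its class in T^d).\<close>
definition negE :: "'e set \<Rightarrow> 'e \<Rightarrow> real" where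
  "negE B i = - (if i \<in> B then 1 else 0)"

text \<open>v \<in> x + S_m, i.e. (v - x)_m = min_i (v - x)_i; invariant under the quotient.\<close>
definition in_sector :: "('e \<Rightarrow> real) \<Rightarrow> ('e \<Rightarrow> real) \<Rightarrow> 'e \<Rightarrow> bool" where
  "in_sector x v m \<longleftrightarrow> (\<forall>i. v m - x m \<le> v i - x i)"

definition coarse_type :: "('e \<Rightarrow> 'v set) \<Rightarrow> ('e \<Rightarrow> real) \<Rightarrow> 'e \<Rightarrow> nat" where
  "coarse_type ends x m = card {B \<in> bases ends. in_sector x (negE B) m}"

type_synonym ('e, 'k) mpoly = "('e \<Rightarrow>\<^sub>0 nat) \<Rightarrow>\<^sub>0 'k"

definition Var :: "'e \<Rightarrow> ('e, 'k::comm_ring_1) mpoly" where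
  "Var e = Poly_Mapping.single (Poly_Mapping.single e 1) 1"

definition monom :: "('e::finite \<Rightarrow> nat) \<Rightarrow> ('e, 'k::comm_ring_1) mpoly" where
  "monom t = (\<Prod>e\<in>UNIV. Var e ^ t e)"

definition ideal_gen :: "'a::comm_ring_1 set \<Rightarrow> 'a set" where
  "ideal_gen S = {p. \<exists>F c. finite F \<and> F \<subseteq> S \<and> p = (\<Sum>g\<in>F. c g * g)}"

definition coarse_type_ideal :: "('e::finite \<Rightarrow> 'v set) \<Rightarrow> ('e, 'k::field) mpoly set" where
  "coarse_type_ideal ends = ideal_gen {monom (coarse_type ends p) | p. True}"

text \<open>Exponent t_{i_j} (0-based position j in list is = [i_1,...,i_{d'+1}])\<close>
definition gen_exp :: "('e \<Rightarrow> 'v set) \<Rightarrow> 'e list \<Rightarrow> nat \<Rightarrow> nat" where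
  "gen_exp ends is j =
     (if j = 0 then bIJ ends {is ! 0} {} + bIJ ends {} (set is)
      else bIJ ends {is ! j} (set (take j is)))"

definition gen_monom :: "('e \<Rightarrow> 'v set) \<Rightarrow> 'e list \<Rightarrow> ('e, 'k::comm_ring_1) mpoly" where
  "gen_monom ends is = (\<Prod>j<length is. Var (is ! j) ^ gen_exp ends is j)"

definition admissible :: "('e \<Rightarrow> 'v set) \<Rightarrow> 'e list \<Rightarrow> bool" where
  "admissible ends is \<longleftrightarrow> is \<noteq> [] \<and> distinct is \<and>
     (\<exists>B\<in>bases ends. B \<subseteq> UNIV - set (butlast is))"

end

theory Submission
  imports Defs
begin

lemma ig_zero: "0 \<in> ideal_gen T"
  unfolding ideal_gen_def by (rule CollectI, rule exI[of _ "{}"]) auto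

lemma ig_gen: "t \<in> T \<Longrightarrow> a * t \<in> ideal_gen T"
  unfolding ideal_gen_def by (rule CollectI, rule exI[of _ "{t}"], rule exI[of _ "\<lambda>_. a"]) auto

lemma ig_add:
  assumes "p1 \<in> ideal_gen T" "p2 \<in> ideal_gen T"
  shows "p1 + p2 \<in> ideal_gen T"
proof -
  obtain F1 c1 where 1: "finite F1" "F1 \<subseteq> T" "p1 = (\<Sum>g\<in>F1. c1 g * g)"
    using assms(1) unfolding ideal_gen_def by blast
  obtain F2 c2 where 2: "finite F2" "F2 \<subseteq> T" "p2 = (\<Sum>g\<in>F2. c2 g * g)"
    using assms(2) unfolding ideal_gen_def by blast
  let ?c = "\<lambda>g. (if g \<in> F1 then c1 g else 0) + (if g \<in> F2 then c2 g else 0)"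
  have "(\<Sum>g\<in>F1 \<union> F2. ?c g * g) = (\<Sum>g\<in>F1 \<union> F2. (if g \<in> F1 then c1 g * g else 0))
     + (\<Sum>g\<in>F1 \<union> F2. (if g \<in> F2 then c2 g * g else 0))"
  proof -
    have "?c g * g = (if g \<in> F1 then c1 g * g else 0) + (if g \<in> F2 then c2 g * g else 0)" for g
      by (simp add: distrib_right)
    then show ?thesis by (simp only: sum.distrib[symmetric])
  qed
  also have "\<dots> = p1 + p2"
  proof -
    have f: "finite (F1 \<union> F2)" using 1 2 by simp
    have a: "(\<Sum>g\<in>F1 \<union> F2. (if g \<in> F1 then c1 g * g else 0)) = p1"
      using sum.inter_restrict[OF f, of "\<lambda>g. c1 g * g" F1] 1(3) by (simp add: Int_absorb2)
    have b: "(\<Sum>g\<in>F1 \<union> F2. (if g \<in> F2 then c2 g * g else 0)) = p2"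
      using sum.inter_restrict[OF f, of "\<lambda>g. c2 g * g" F2] 2(3) by (simp add: Int_absorb2)
    show ?thesis using a b by simp
  qed
  finally have eq: "(\<Sum>g\<in>F1 \<union> F2. ?c g * g) = p1 + p2" .
  have fin: "finite (F1 \<union> F2)" "F1 \<union> F2 \<subseteq> T" using 1 2 by auto
  show ?thesis unfolding ideal_gen_def
    apply (rule CollectI)
    apply (rule exI[of _ "F1 \<union> F2"])
    apply (rule exI[of _ ?c])
    using fin eq by (simp only: simp_thms)
qed

lemma ig_sum: "finite F \<Longrightarrow> (\<And>g. g \<in> F \<Longrightarrow> f g \<in> ideal_gen T) \<Longrightarrow> sum f F \<in> ideal_gen T"
  by (induction F rule: finite_induct) (auto intro: ig_zero ig_add)

lemma ig_sub:
  assumes "\<And>s. s \<in> S \<Longrightarrow> \<exists>t\<in>T. \<exists>q. s = q * t"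
  shows "ideal_gen S \<subseteq> ideal_gen T"
proof
  fix p assume "p \<in> ideal_gen S"
  then obtain F c where F: "finite F" "F \<subseteq> S" "p = (\<Sum>g\<in>F. c g * g)"
    unfolding ideal_gen_def by blast
  have "c g * g \<in> ideal_gen T" if "g \<in> F" for g
  proof -
    have "g \<in> S" using F that by blast
    then obtain t q where "t \<in> T" "g = q * t" using assms by blast
    then show ?thesis using ig_gen[of t T "c g * q"] by (simp add: mult.assoc)
  qed
  then show "p \<in> ideal_gen T" using F(1) F(3) ig_sum[of F "\<lambda>g. c g * g" T] by simp
qed

lemma monom_split:
  assumes "\<And>e. s e \<le> t e"
  shows "(monom t :: ('e::finite,'k::comm_ring_1) mpoly) = monom (\<lambda>e. t e - s e) * monom s"
  unfolding monom_def prod.distrib[symmetric] power_add[symmetric]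
  using assms by simp

definition ge :: "('e \<Rightarrow> 'v set) \<Rightarrow> 'e list \<Rightarrow> 'e \<Rightarrow> nat" where
  "ge ends is e = (if e \<in> set is then gen_exp ends is (THE j. j < length is \<and> is ! j = e) else 0)"

lemma ge_nth: "distinct is \<Longrightarrow> j < length is \<Longrightarrow> ge ends is (is ! j) = gen_exp ends is j"
  unfolding ge_def
  by (subst the_equality[of _ j]) (auto simp: nth_eq_iff_index_eq)

lemma gen_monom_eq:
  assumes "distinct is"
  shows "(gen_monom ends is :: ('e::finite,'k::comm_ring_1) mpoly) = monom (ge ends is)"
proof -
  have "monom (ge ends is) = (\<Prod>e\<in>set is. (Var e ^ ge ends is e :: ('e,'k) mpoly))"
    unfolding monom_def by (rule prod.mono_neutral_right) (auto simp: ge_def)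
  also have "\<dots> = (\<Prod>j<length is. Var (is ! j) ^ ge ends is (is ! j))"
  proof -
    have "set is = (\<lambda>j. is ! j) ` {..<length is}" by (auto simp: set_conv_nth)
    moreover have "inj_on (\<lambda>j. is ! j) {..<length is}" by (rule inj_on_nth) (auto simp: assms)
    ultimately show ?thesis by (simp add: prod.reindex)
  qed
  also have "\<dots> = gen_monom ends is"
    unfolding gen_monom_def using assms by (auto simp: ge_nth intro!: prod.cong)
  finally show ?thesis by simp
qed


lemma bases_nonempty:
  fixes ends :: "'e::finite \<Rightarrow> 'v set"
  assumes "connects ends UNIV"
  shows "bases ends \<noteq> {}"
proof -
  obtain F where F: "connects ends F" "\<forall>G. connects ends G \<longrightarrow> card F \<le> card G"
    using ex_has_least_nat[of "connects ends" UNIV card] assms by blast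
  have "spanning_tree ends F"
    unfolding spanning_tree_def
  proof (intro conjI ballI notI)
    show "connects ends F" by (rule F(1))
  next
    fix e assume "e \<in> F" "connects ends (F - {e})"
    then have "card F \<le> card (F - {e})" using F(2) by blast
    moreover have "card (F - {e}) < card F" using \<open>e \<in> F\<close> card_Diff1_less[of F e] by simp
    ultimately show False by simp
  qed
  then show ?thesis unfolding bases_def by blast
qed

lemma set_take_nth: "y \<in> set (take j xs) \<longleftrightarrow> (\<exists>k<j. k < length xs \<and> xs ! k = y)"
  by (auto simp: in_set_conv_nth)


lemma dir1:
  fixes ends :: "'e::finite \<Rightarrow> 'v set" and "is" :: "'e list"
  assumes dist: "distinct is" and ne: "is \<noteq> []"
  shows "\<exists>x. (\<forall>j<length is. coarse_type ends x (is ! j) \<le> gen_exp ends is j)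
            \<and> (\<forall>e. e \<notin> set is \<longrightarrow> coarse_type ends x e = 0)"
proof -
  define L where "L = length is"
  have L: "L > 0" using ne by (simp add: L_def)
  define pos where "pos e = (THE j. j < L \<and> is ! j = e)" for e
  have pos: "pos (is ! j) = j" if "j < L" for j
    unfolding pos_def using that dist by (intro the_equality) (auto simp: L_def nth_eq_iff_index_eq)
  define u where "u e = (if e \<in> set is then real (pos e) / real L else 2)" for e
  have u: "u (is ! j) = real j / real L" if "j < L" for j
    using that pos by (simp add: u_def L_def)
  have u_lt: "real j / real L < 1" if "j < L" for j using that L by simp
  have u_ge: "real j / real L \<ge> 0" for j by simp
  define x where "x e = - u e" for e
  have char: "\<exists>j<L. m = is ! j \<and> ((m \<in> B \<and> (\<forall>k<j. is ! k \<notin> B)) \<or> (j = 0 \<and> B \<inter> set is = {}))"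
    if sec: "in_sector x (negE B) m" for B m
  proof -
    have h: "\<And>i. (if m \<in> B then -1 else 0) + u m \<le> (if i \<in> B then -1 else 0) + u i"
      using sec unfolding in_sector_def negE_def x_def by (auto split: if_splits)
    have "m \<in> set is"
    proof (rule ccontr)
      assume "m \<notin> set is"
      then have "u m = 2" by (simp add: u_def)
      moreover have "u (is ! 0) = 0" using u[of 0] L by simp
      moreover note h[of "is ! 0"]
      ultimately show False by (auto split: if_splits)
    qed
    then obtain j where j: "j < L" "m = is ! j" by (auto simp: in_set_conv_nth L_def)
    show ?thesis
    proof (cases "m \<in> B")
      case True
      have "\<forall>k<j. is ! k \<notin> B"
      proof (intro allI impI notI)
        fix k assume k: "k < j" "is ! k \<in> B"
        have "real k / real L < real j / real L" using k L by (simp add: divide_strict_right_mono)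
        then show False using h[of "is ! k"] True k j u[of k] u[of j] by auto
      qed
      then show ?thesis using j True by blast
    next
      case False
      have d: "B \<inter> set is = {}"
      proof (rule ccontr)
        assume "B \<inter> set is \<noteq> {}"
        then obtain k where k: "k < L" "is ! k \<in> B" by (auto simp: in_set_conv_nth L_def)
        have h2: "(if is ! j \<in> B then -1 else 0) + u (is ! j) \<le> (if is ! k \<in> B then -1 else 0) + u (is ! k)"
          using h[of "is ! k"] j by simp
        have a1: "real k / real L < 1" using u_lt k by simp
        have a2: "0 \<le> real j / real L" by simp
        have a3: "real j / real L \<le> real k / real L - 1" using h2 False k j u[of k] u[of j] by simp
        show False using a1 a2 a3 by linarith
      qed
      have "j = 0"
      proof (rule ccontr)
        assume "j \<noteq> 0"
        then have "0 < real j / real L" using L by simp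
        moreover have "is ! 0 \<notin> B" using d L by (auto simp: L_def)
        ultimately show False using h[of "is ! 0"] False j u[of 0] u[of j] L by auto
      qed
      then show ?thesis using j d by blast
    qed
  qed
  have A: "coarse_type ends x (is ! j) \<le> gen_exp ends is j" if jL: "j < length is" for j
  proof -
    let ?m = "is ! j"
    have sub: "{B \<in> bases ends. in_sector x (negE B) ?m} \<subseteq>
       {B \<in> bases ends. {?m} \<subseteq> B \<and> set (take j is) \<inter> B = {}} \<union>
       (if j = 0 then {B \<in> bases ends. {} \<subseteq> B \<and> set is \<inter> B = {}} else {})"
    proof
      fix B assume "B \<in> {B \<in> bases ends. in_sector x (negE B) ?m}"
      then have B: "B \<in> bases ends" "in_sector x (negE B) ?m" by auto
      obtain j' where j': "j' < L" "?m = is ! j'"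
        "(?m \<in> B \<and> (\<forall>k<j'. is ! k \<notin> B)) \<or> (j' = 0 \<and> B \<inter> set is = {})"
        using char[OF B(2)] by blast
      have "j' = j" using j' jL dist by (simp add: L_def nth_eq_iff_index_eq)
      then show "B \<in> {B \<in> bases ends. {?m} \<subseteq> B \<and> set (take j is) \<inter> B = {}} \<union>
       (if j = 0 then {B \<in> bases ends. {} \<subseteq> B \<and> set is \<inter> B = {}} else {})"
        using j' B by (auto simp: set_take_nth)
    qed
    have "coarse_type ends x ?m \<le> card ({B \<in> bases ends. {?m} \<subseteq> B \<and> set (take j is) \<inter> B = {}} \<union>
       (if j = 0 then {B \<in> bases ends. {} \<subseteq> B \<and> set is \<inter> B = {}} else {}))"
      unfolding coarse_type_def by (rule card_mono[OF _ sub]) simp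
    also have "\<dots> \<le> card {B \<in> bases ends. {?m} \<subseteq> B \<and> set (take j is) \<inter> B = {}} +
       card (if j = 0 then {B \<in> bases ends. {} \<subseteq> B \<and> set is \<inter> B = {}} else {})"
      by (rule card_Un_le)
    also have "\<dots> = gen_exp ends is j"
      unfolding gen_exp_def bIJ_def by simp
    finally show ?thesis .
  qed
  have B: "coarse_type ends x e = 0" if "e \<notin> set is" for e
  proof -
    have "{B \<in> bases ends. in_sector x (negE B) e} = {}"
      using char that by (force simp: in_set_conv_nth L_def)
    then show ?thesis unfolding coarse_type_def by simp
  qed
  show ?thesis using A B by blast
qed


lemma dir2:
  fixes ends :: "'e::finite \<Rightarrow> 'v set" and x :: "'e \<Rightarrow> real"
  assumes nb: "bases ends \<noteq> {}"
  shows "\<exists>is. admissible ends is \<and> (\<forall>j<length is. gen_exp ends is j \<le> coarse_type ends x (is ! j))"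
proof -
  define u where "u i = - x i" for i
  define \<mu> where "\<mu> = Min (range u)"
  have mu_le: "\<mu> \<le> u i" for i unfolding \<mu>_def by simp
  have "\<mu> \<in> range u" unfolding \<mu>_def by (rule Min_in) auto
  then obtain a where a: "u a = \<mu>" by auto
  define S where "S = {i. u i < \<mu> + 1}"
  have aS: "a \<in> S" using a by (simp add: S_def)
  obtain ys where ys: "distinct ys" "set ys = S" using finite_distinct_list[of S] by auto
  define xs where "xs = sort_key u ys"
  have xs: "distinct xs" "set xs = S" "sorted (map u xs)"
    using ys by (auto simp: xs_def)
  have mono: "u (xs ! k) \<le> u (xs ! j)" if "k \<le> j" "j < length xs" for k j
    using xs(3) that by (auto simp: sorted_iff_nth_mono)
  have lxs: "length xs > 0" using aS xs(2) by (cases xs) auto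
  define P where "P j = (\<exists>B\<in>bases ends. B \<subseteq> UNIV - set (take j xs))" for j
  define r where "r = Max {j. j < length xs \<and> P j}"
  have fin: "finite {j. j < length xs \<and> P j}" by simp
  have P0: "0 \<in> {j. j < length xs \<and> P j}" using lxs nb by (auto simp: P_def)
  have r: "r < length xs" "P r" using Min_in fin P0 Max_in[OF fin] unfolding r_def by blast+
  have rmax: "\<not> P (Suc r)" if "Suc r < length xs"
  proof
    assume "P (Suc r)"
    then have "Suc r \<le> r" using Max_ge[OF fin, of "Suc r"] that unfolding r_def by auto
    then show False by simp
  qed
  define "is" where "is = take (Suc r) xs"
  have len: "length is = Suc r" using r by (simp add: is_def)
  have bl: "butlast is = take r xs" using r by (simp add: is_def butlast_take)
  have adm: "admissible ends is"
    unfolding admissible_def using r(2) len bl xs(1) by (auto simp: P_def is_def)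
  have isnth: "is ! j = xs ! j" if "j < Suc r" for j using that by (simp add: is_def)
  have takej: "take j is = take j xs" if "j < Suc r" for j using that by (simp add: is_def)
  have in_sec: "in_sector x (negE B) m \<longleftrightarrow>
     (\<forall>i. (if m \<in> B then -1 else 0) + u m \<le> (if i \<in> B then -1 else 0) + u i)" for B m
    unfolding in_sector_def negE_def u_def by (auto split: if_splits)
  have bIJ_is: "bIJ ends {} (set is) \<le> card {B \<in> bases ends. S \<inter> B = {}}"
  proof (cases "Suc r < length xs")
    case True
    have "{B \<in> bases ends. {} \<subseteq> B \<and> set is \<inter> B = {}} = {}"
      using rmax[OF True] unfolding P_def is_def by blast
    then show ?thesis unfolding bIJ_def by (metis card.empty zero_le)
  next
    case False
    then have "is = xs" using r by (simp add: is_def)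
    then show ?thesis unfolding bIJ_def using xs(2) by simp
  qed
  have main: "gen_exp ends is j \<le> coarse_type ends x (is ! j)" if jl: "j < length is" for j
  proof (cases "j = 0")
    case False
    let ?m = "xs ! j"
    have jx: "j < length xs" using jl len r by simp
    have mS: "?m \<in> S" using xs(2) jx by auto
    have sub: "{B \<in> bases ends. {?m} \<subseteq> B \<and> set (take j xs) \<inter> B = {}}
       \<subseteq> {B \<in> bases ends. in_sector x (negE B) ?m}"
    proof (rule subsetI)
      fix B assume "B \<in> {B \<in> bases ends. {?m} \<subseteq> B \<and> set (take j xs) \<inter> B = {}}"
      then have B: "B \<in> bases ends" "?m \<in> B" "set (take j xs) \<inter> B = {}" by auto
      have "in_sector x (negE B) ?m" unfolding in_sec
      proof
        fix i
        show "(if ?m \<in> B then -1 else 0) + u ?m \<le> (if i \<in> B then -1 else 0) + u i"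
        proof (cases "i \<in> B")
          case True
          have "u ?m \<le> u i"
          proof (rule ccontr)
            assume "\<not> u ?m \<le> u i"
            then have lt: "u i < u ?m" by simp
            then have "i \<in> S" using mS by (simp add: S_def)
            then obtain k where k: "k < length xs" "xs ! k = i" using xs(2) by (auto simp: in_set_conv_nth)
            have "k < j" using mono[of j k] k lt by (cases "k < j") auto
            then have "i \<in> set (take j xs)" using k by (auto simp: set_take_nth)
            then show False using B(3) True by blast
          qed
          then show ?thesis using B True by simp
        next
          case False
          have "u ?m < \<mu> + 1" using mS by (simp add: S_def)
          then show ?thesis using B False mu_le[of i] by simp
        qed
      qed
      then show "B \<in> {B \<in> bases ends. in_sector x (negE B) ?m}" using B by simp
    qed
    have "gen_exp ends is j = card {B \<in> bases ends. {?m} \<subseteq> B \<and> set (take j xs) \<inter> B = {}}"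
      unfolding gen_exp_def bIJ_def using False isnth takej jl len by simp
    also have "\<dots> \<le> card {B \<in> bases ends. in_sector x (negE B) ?m}"
      by (rule card_mono[OF _ sub]) simp
    finally show ?thesis unfolding coarse_type_def using isnth jl len by simp
  next
    case True
    let ?m = "xs ! 0"
    have m0: "is ! 0 = ?m" using isnth by simp
    have mS: "?m \<in> S" using xs(2) lxs by auto
    have um: "u ?m = \<mu>"
    proof -
      obtain k where k: "k < length xs" "xs ! k = a" using aS xs(2) by (auto simp: in_set_conv_nth)
      then show ?thesis using mono[of 0 k] a mu_le[of ?m] by simp
    qed
    have sub: "{B \<in> bases ends. ?m \<in> B} \<union> {B \<in> bases ends. S \<inter> B = {}}
       \<subseteq> {B \<in> bases ends. in_sector x (negE B) ?m}"
    proof (safe)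
      fix B assume B: "B \<in> bases ends" "?m \<in> B"
      show "in_sector x (negE B) ?m" unfolding in_sec
      proof
        fix i show "(if ?m \<in> B then -1 else 0) + u ?m \<le> (if i \<in> B then -1 else 0) + u i"
          using um mu_le[of i] B by auto
      qed
    next
      fix B assume B: "B \<in> bases ends" "S \<inter> B = {}"
      show "in_sector x (negE B) ?m" unfolding in_sec
      proof
        fix i
        have "?m \<notin> B" using B mS by blast
        moreover have "i \<in> B \<Longrightarrow> u i \<ge> \<mu> + 1"
        proof -
          assume "i \<in> B" then have "i \<notin> S" using B by blast
          then show ?thesis by (simp add: S_def)
        qed
        ultimately show "(if ?m \<in> B then -1 else 0) + u ?m \<le> (if i \<in> B then -1 else 0) + u i"
          using um mu_le[of i] by auto
      qed
    qed
    have disj: "{B \<in> bases ends. ?m \<in> B} \<inter> {B \<in> bases ends. S \<inter> B = {}} = {}" using mS by blast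
    have "gen_exp ends is j = card {B \<in> bases ends. ?m \<in> B} + bIJ ends {} (set is)"
      unfolding gen_exp_def using True m0 by (simp add: bIJ_def)
    also have "\<dots> \<le> card {B \<in> bases ends. ?m \<in> B} + card {B \<in> bases ends. S \<inter> B = {}}"
      using bIJ_is by simp
    also have "\<dots> = card ({B \<in> bases ends. ?m \<in> B} \<union> {B \<in> bases ends. S \<inter> B = {}})"
      using disj by (simp add: card_Un_disjoint)
    also have "\<dots> \<le> card {B \<in> bases ends. in_sector x (negE B) ?m}"
      by (rule card_mono[OF _ sub]) simp
    finally show ?thesis unfolding coarse_type_def using True m0 by simp
  qed
  show ?thesis using adm main by blast
qed


theorem mainTheorem2:
  fixes ends :: "'e::finite \<Rightarrow> 'v::finite set"
  assumes "simple_graph ends"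
    and "connects ends UNIV"
    and "bridgeless ends"
  shows "(coarse_type_ideal ends :: ('e, 'k::field) mpoly set)
           = ideal_gen {gen_monom ends is | is. admissible ends is}"
proof
  have nb: "bases ends \<noteq> {}" using bases_nonempty assms(2) by blast
  show "(coarse_type_ideal ends :: ('e, 'k::field) mpoly set)
           \<subseteq> ideal_gen {gen_monom ends is | is. admissible ends is}"
    unfolding coarse_type_ideal_def
  proof (rule ig_sub)
    fix s :: "('e, 'k) mpoly"
    assume "s \<in> {monom (coarse_type ends p) | p. True}"
    then obtain p where s: "s = monom (coarse_type ends p)" by blast
    obtain "is" where adm: "admissible ends is"
      and le: "\<forall>j<length is. gen_exp ends is j \<le> coarse_type ends p (is ! j)"
      using dir2[OF nb, of p] by blast
    have dist: "distinct is" using adm by (simp add: admissible_def)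
    have ge_le: "ge ends is e \<le> coarse_type ends p e" for e
    proof (cases "e \<in> set is")
      case True
      then obtain j where j: "j < length is" "e = is ! j" by (auto simp: in_set_conv_nth)
      then show ?thesis using le ge_nth[OF dist j(1), of ends] by simp
    next
      case False then show ?thesis by (simp add: ge_def)
    qed
    have "s = monom (\<lambda>e. coarse_type ends p e - ge ends is e) * gen_monom ends is"
      unfolding s gen_monom_eq[OF dist] by (rule monom_split[OF ge_le])
    then show "\<exists>t\<in>{gen_monom ends is | is. admissible ends is}. \<exists>q. s = q * t"
      using adm by blast
  qed
  show "ideal_gen {gen_monom ends is | is. admissible ends is}
     \<subseteq> (coarse_type_ideal ends :: ('e, 'k::field) mpoly set)"
    unfolding coarse_type_ideal_def
  proof (rule ig_sub)
    fix s :: "('e, 'k) mpoly"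
    assume "s \<in> {gen_monom ends is | is. admissible ends is}"
    then obtain "is" where s: "s = gen_monom ends is" and adm: "admissible ends is" by blast
    have dist: "distinct is" and ne: "is \<noteq> []" using adm by (auto simp: admissible_def)
    obtain p where le: "\<forall>j<length is. coarse_type ends p (is ! j) \<le> gen_exp ends is j"
      and z: "\<forall>e. e \<notin> set is \<longrightarrow> coarse_type ends p e = 0"
      using dir1[OF dist ne, of ends] by blast
    have ct_le: "coarse_type ends p e \<le> ge ends is e" for e
    proof (cases "e \<in> set is")
      case True
      then obtain j where j: "j < length is" "e = is ! j" by (auto simp: in_set_conv_nth)
      then show ?thesis using le ge_nth[OF dist j(1), of ends] by simp
    next
      case False then show ?thesis using z by simp
    qed
    have "s = monom (\<lambda>e. ge ends is e - coarse_type ends p e) * monom (coarse_type ends p)"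
      unfolding s gen_monom_eq[OF dist] by (rule monom_split[OF ct_le])
    then show "\<exists>t\<in>{monom (coarse_type ends p) | p. True}. \<exists>q. s = q * t"
      by blast
  qed
qed

end
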